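(* Let $N=pq$ with $p,q$ distinct primes. Let $d\in\mathbb{N}$ and $b_1,\dots,b_d\in\mathbb{Z}$. For each $i$ let $f_i=n_{2,i}X^2+n_{1,i}X+n_{0,i}\in\mathbb{Z}[X]$ be a polynomial of degree $2$ with $f_i(b_i)=N$. Suppose $\gcd(n_{2,i}b_i,N)=1$ for every $i$, and define $b_{d+i}:=n_{0,i}\cdot n_{2,i}^{-1}\cdot b_i^{-1}\bmod N$ for $1\le i\le d$ (inverses taken modulo $N$). If $\gcd(b_j-b_k,N)=1$ for all $j,k\in\{1,\dots,2d\}$ with $j\neq k$, then \[\nu\Big(\prod_{i=1}^d f_i\Big)=2dp+2dq-8d^2.\]
   Context: $Z_N=\{0,1,\dots,N-1\}$. For $g\in\mathbb{Z}[X]$, an element $x\in Z_N$ is called suitable for $g$ if $1<\gcd(g(x),N)<N$, and $\nu(g)$ denotes the number of $x\in Z_N$ suitable for $g$. *)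

theory Defs
  imports "HOL-Computational_Algebra.Polynomial" "HOL-Number_Theory.Number_Theory"
begin

definition suitable :: "int \<Rightarrow> int poly \<Rightarrow> int \<Rightarrow> bool" where
  "suitable N g x \<longleftrightarrow> x \<in> {0..N-1} \<and> 1 < gcd (poly g x) N \<and> gcd (poly g x) N < N"

definition nu :: "int \<Rightarrow> int poly \<Rightarrow> nat" where
  "nu N g = card {x \<in> {0..N-1}. suitable N g x}"

text \<open>An inverse of a modulo N (a chosen representative; only used under coprimality,
  and only its residue mod N matters).\<close>
definition inv_modN :: "int \<Rightarrow> int \<Rightarrow> int" where
  "inv_modN N a = (SOME y. [a * y = 1] (mod N))"

end

theory Submission
  imports Defs
begin

lemma key_i:
  fixes r N n0 n1 n2 b c x :: int
  assumes "prime r" "r dvd N" "poly [:n0,n1,n2:] b = N" "\<not> r dvd n2"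
    "N dvd (n2*b + n1 + n2*c)"
  shows "r dvd poly [:n0,n1,n2:] x \<longleftrightarrow> r dvd (x - b) \<or> r dvd (x - c)"
proof -
  obtain t where t: "n2*b + n1 + n2*c = N*t" using assms(5) by blast
  have h1: "n1 = N*t - n2*b - n2*c" using t by simp
  have h0: "n0 = N - b*(N*t - n2*b - n2*c) - n2*b^2" using assms(3) h1 by (simp add: algebra_simps power2_eq_square)
  have e: "poly [:n0,n1,n2:] x = N + (x-b)*(n2*(x - c)) + N*((x-b)*t)"
    by (simp add: h0 h1 algebra_simps power2_eq_square)
  have "r dvd poly [:n0,n1,n2:] x \<longleftrightarrow> r dvd (x-b)*(n2*(x - c))"
  proof -
    have "r dvd N + N*((x-b)*t)" using assms(2) by simp
    then show ?thesis unfolding e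
      by (metis add.commute add.left_commute dvd_add_right_iff)
  qed
  also have "\<dots> \<longleftrightarrow> r dvd (x - b) \<or> r dvd (x - c)"
    using assms(1,4) by (simp add: prime_dvd_mult_iff)
  finally show ?thesis .
qed

lemma other_root:
  fixes N n0 n1 n2 b :: int
  assumes "poly [:n0,n1,n2:] b = N" "gcd (n2*b) N = 1"
  shows "N dvd (n2*b + n1 + n2*((n0 * inv_modN N (n2 * b)) mod N))"
proof -
  have cp: "coprime (n2*b) N" using assms(2) by (simp add: coprime_iff_gcd_eq_1)
  define y where "y = inv_modN N (n2*b)"
  have "[n2*b*y = 1] (mod N)"
    unfolding y_def inv_modN_def using cong_solve_coprime_int[OF cp] by (rule someI_ex)
  then have "N dvd n2*b*y - 1" by (simp add: cong_iff_dvd_diff)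
  then obtain t where t: "n2*b*y - 1 = N*t" by blast
  define D where "D = (n0*y) div N"
  have m: "(n0*y) mod N = n0*y - N*D" unfolding D_def by (simp add: minus_mult_div_eq_mod)
  have "b*(n2*b + n1 + n2*((n0 * y) mod N)) = N*(1 + n0*t - b*n2*D)"
  proof -
    have h0: "n2*b^2 + n1*b = N - n0" using assms(1) by (simp add: algebra_simps power2_eq_square)
    have h2: "n2*b*y = N*t + 1" using t by simp
    have "b*(n2*b + n1 + n2*((n0 * y) mod N)) = (n2*b^2 + n1*b) + n0*(n2*b*y) - N*b*n2*D"
      unfolding m by (simp add: algebra_simps power2_eq_square)
    also have "\<dots> = N*(1 + n0*t - b*n2*D)"
      unfolding h2 h0 by (simp add: algebra_simps)
    finally show ?thesis .
  qed
  then have "N dvd b*(n2*b + n1 + n2*((n0 * y) mod N))" by simp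
  moreover have "coprime b N" using cp by simp
  ultimately show ?thesis unfolding y_def by (metis coprime_commute coprime_dvd_mult_right_iff)
qed

lemma coprime_prime_iff:
  fixes p a :: int
  assumes "prime p"
  shows "coprime a p \<longleftrightarrow> \<not> p dvd a"
proof
  assume "coprime a p" then show "\<not> p dvd a"
    using assms not_coprimeI[of p a p] not_prime_unit[of p] dvd_refl[of p] by blast
next
  assume "\<not> p dvd a" then show "coprime a p"
    using prime_imp_coprime[OF assms] coprime_commute by blast
qed

lemma gcd_iff:
  fixes p q N a :: int
  assumes "prime p" "prime q" "p \<noteq> q" "N = p*q"
  shows "(1 < gcd a N \<and> gcd a N < N) \<longleftrightarrow> ((p dvd a) \<noteq> (q dvd a))"
proof -
  have pos: "N > 0" using assms by (simp add: prime_gt_0_int)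
  have g1: "gcd a N \<ge> 1" using pos gcd_pos_int[of a N] by linarith
  have g2: "gcd a N \<le> N" using pos by (simp add: zdvd_imp_le)
  have c1: "gcd a N = 1 \<longleftrightarrow> \<not> p dvd a \<and> \<not> q dvd a"
  proof -
    have "gcd a N = 1 \<longleftrightarrow> coprime a p \<and> coprime a q"
      using assms(4) by (simp add: coprime_iff_gcd_eq_1[symmetric])
    also have "\<dots> \<longleftrightarrow> \<not> p dvd a \<and> \<not> q dvd a"
      using assms(1,2) by (simp add: coprime_prime_iff)
    finally show ?thesis .
  qed
  have c2: "gcd a N = N \<longleftrightarrow> p dvd a \<and> q dvd a"
  proof -
    have "gcd a N = N \<longleftrightarrow> N dvd a" using pos gcd_proj2_iff[of a N] by simp
    also have "\<dots> \<longleftrightarrow> p dvd a \<and> q dvd a"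
    proof
      assume "N dvd a" then show "p dvd a \<and> q dvd a" using assms(4) by auto
    next
      assume "p dvd a \<and> q dvd a" then show "N dvd a"
        using assms(4) divides_mult[of p a q] primes_coprime[OF assms(1-3)] by blast
    qed
    finally show ?thesis .
  qed
  show ?thesis using g1 g2 c1 c2 by auto
qed

lemma crt_bij:
  fixes p q N :: int
  assumes "prime p" "prime q" "p \<noteq> q" "N = p*q"
  shows "bij_betw (\<lambda>x. (x mod p, x mod q)) {0..N-1} ({0..p-1} \<times> {0..q-1})"
proof -
  let ?f = "\<lambda>x. (x mod p, x mod q)"
  have pp: "p > 0" "q > 0" using assms by (simp_all add: prime_gt_0_int)
  have inj: "inj_on ?f {0..N-1}"
  proof
    fix x y assume x: "x \<in> {0..N-1}" and y: "y \<in> {0..N-1}" and e: "?f x = ?f y"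
    then have "p dvd x - y" "q dvd x - y" by (simp_all add: mod_eq_dvd_iff)
    then have d: "N dvd x - y" using assms(4) divides_mult[of p "x-y" q] primes_coprime[OF assms(1-3)] by blast
    have "\<bar>x - y\<bar> < N" using x y by auto
    show "x = y"
    proof (rule ccontr)
      assume "x \<noteq> y"
      then have "\<bar>N\<bar> \<le> \<bar>x-y\<bar>" using dvd_imp_le_int[of "x-y" N] d by simp
      then show False using \<open>\<bar>x - y\<bar> < N\<close> by simp
    qed
  qed
  have sub: "?f ` {0..N-1} \<subseteq> {0..p-1} \<times> {0..q-1}" using pp by auto
  have "card (?f ` {0..N-1}) = card ({0..p-1} \<times> {0..q-1})"
    using card_image[OF inj] pp assms(4) by (simp add: card_cartesian_product nat_mult_distrib)
  then have "?f ` {0..N-1} = {0..p-1} \<times> {0..q-1}"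
    using sub by (intro card_subset_eq) auto
  then show ?thesis using inj by (simp add: bij_betw_def)
qed

lemma split_range:
  fixes d :: nat
  shows "(\<exists>j\<in>{1..2*d}. P j) \<longleftrightarrow> (\<exists>i\<in>{1..d}. P i \<or> P (d+i))"
proof
  assume "\<exists>j\<in>{1..2*d}. P j"
  then obtain j where j: "j \<in> {1..2*d}" "P j" by blast
  show "\<exists>i\<in>{1..d}. P i \<or> P (d+i)"
  proof (cases "j \<le> d")
    case True then show ?thesis using j by auto
  next
    case False
    then have "j - d \<in> {1..d}" "d + (j - d) = j" using j by auto
    then show ?thesis using j by metis
  qed
qed auto

lemma inj_mod:
  fixes r N :: int and b :: "nat \<Rightarrow> int" and d :: nat
  assumes "prime r" "r dvd N"
    and "\<forall>j\<in>{1..2*d}. \<forall>k\<in>{1..2*d}. j \<noteq> k \<longrightarrow> gcd (b j - b k) N = 1"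
  shows "inj_on (\<lambda>j. b j mod r) {1..2*d}"
proof
  fix j k assume j: "j \<in> {1..2*d}" and k: "k \<in> {1..2*d}" and e: "b j mod r = b k mod r"
  show "j = k"
  proof (rule ccontr)
    assume "j \<noteq> k"
    then have g: "gcd (b j - b k) N = 1" using assms(3) j k by blast
    have "r dvd b j - b k" using e by (simp add: mod_eq_dvd_iff)
    then have "r dvd gcd (b j - b k) N" using assms(2) by simp
    then have "r dvd 1" using g by simp
    then show False using assms(1) not_prime_unit by blast
  qed
qed

lemma image_filter: "f ` {x \<in> A. Q (f x)} = {y \<in> f ` A. Q y}"
  by blast

lemma pair_split:
  assumes "X \<subseteq> A" "Y \<subseteq> C"
  shows "{y \<in> A \<times> C. (case y of (u,v) \<Rightarrow> (u \<in> X) \<noteq> (v \<in> Y))} = X \<times> (C - Y) \<union> (A - X) \<times> Y"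
  using assms by auto

lemma card_split:
  assumes "finite A" "finite C" "X \<subseteq> A" "Y \<subseteq> C"
  shows "card (X \<times> (C - Y) \<union> (A - X) \<times> Y) = card X * card (C - Y) + card (A - X) * card Y"
proof -
  have f: "finite X" "finite Y" using assms finite_subset by auto
  have "card (X \<times> (C - Y) \<union> (A - X) \<times> Y) = card (X \<times> (C - Y)) + card ((A - X) \<times> Y)"
    by (rule card_Un_disjoint) (use assms f in auto)
  then show ?thesis by (simp add: card_cartesian_product)
qed

theorem theorem2p11:
  fixes p q N :: int and d :: nat and b n2 n1 n0 :: "nat \<Rightarrow> int"
  assumes "prime p" and "prime q" and "p \<noteq> q" and "N = p * q"
    and deg: "\<forall>i\<in>{1..d}. n2 i \<noteq> 0"
    and root: "\<forall>i\<in>{1..d}. poly [:n0 i, n1 i, n2 i:] (b i) = N"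
    and cop: "\<forall>i\<in>{1..d}. gcd (n2 i * b i) N = 1"
    and "\<forall>i\<in>{1..d}. b (d + i) = (n0 i * inv_modN N (n2 i * b i)) mod N"
    and "\<forall>j\<in>{1..2*d}. \<forall>k\<in>{1..2*d}. j \<noteq> k \<longrightarrow> gcd (b j - b k) N = 1"
  shows "int (nu N (\<Prod>i\<in>{1..d}. [:n0 i, n1 i, n2 i:])) = 2*d*p + 2*d*q - 8*d^2"
proof -
  define g where "g = (\<Prod>i\<in>{1..d}. [:n0 i, n1 i, n2 i:])"
  have pos: "p > 0" "q > 0" using assms by (simp_all add: prime_gt_0_int)
  define B where "B = (\<lambda>r. (\<lambda>j. b j mod r) ` {1..2*d})"
  have dvdg: "r dvd poly g x \<longleftrightarrow> x mod r \<in> B r" if r: "r \<in> {p,q}" for r x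
  proof -
    have pr: "prime r" using r assms(1,2) by blast
    have rN: "r dvd N" using r assms(4) by auto
    have "r dvd poly g x \<longleftrightarrow> (\<exists>i\<in>{1..d}. r dvd poly [:n0 i, n1 i, n2 i:] x)"
      unfolding g_def poly_prod using pr by (simp add: prime_dvd_prod_iff)
    also have "\<dots> \<longleftrightarrow> (\<exists>i\<in>{1..d}. r dvd x - b i \<or> r dvd x - b (d+i))"
    proof (rule bex_cong[OF refl])
      fix i assume i: "i \<in> {1..d}"
      have nd: "\<not> r dvd n2 i"
      proof
        assume "r dvd n2 i"
        then have rg: "r dvd gcd (n2 i * b i) N" using rN by simp
        have g1: "gcd (n2 i * b i) N = 1" using cop i by blast
        from rg have "r dvd 1" unfolding g1 .
        then show False using pr not_prime_unit by blast
      qed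
      have "N dvd (n2 i * b i + n1 i + n2 i * b (d+i))"
      proof -
        have "poly [:n0 i, n1 i, n2 i:] (b i) = N" "gcd (n2 i * b i) N = 1"
          "b (d + i) = (n0 i * inv_modN N (n2 i * b i)) mod N"
          using root cop assms(8) i by blast+
        then show ?thesis using other_root[of "n0 i" "n1 i" "n2 i" "b i" N] by simp
      qed
      then show "r dvd poly [:n0 i, n1 i, n2 i:] x \<longleftrightarrow> r dvd x - b i \<or> r dvd x - b (d+i)"
        using key_i[OF pr rN _ nd, of "n0 i" "n1 i" "b i" "b (d+i)" x] root i by blast
    qed
    also have "\<dots> \<longleftrightarrow> (\<exists>j\<in>{1..2*d}. r dvd x - b j)"
      by (rule split_range[symmetric])
    also have "\<dots> \<longleftrightarrow> x mod r \<in> B r"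
      unfolding B_def by (auto simp: mod_eq_dvd_iff)
    finally show ?thesis .
  qed
  define \<phi> where "\<phi> = (\<lambda>x::int. (x mod p, x mod q))"
  define P where "P = (\<lambda>(u,v). (u \<in> B p) \<noteq> (v \<in> B q))"
  have subp: "B p \<subseteq> {0..p-1}" and subq: "B q \<subseteq> {0..q-1}" using pos unfolding B_def by auto
  have bij: "bij_betw \<phi> {0..N-1} ({0..p-1} \<times> {0..q-1})"
    unfolding \<phi>_def by (rule crt_bij[OF assms(1-4)])
  have S: "{x \<in> {0..N-1}. suitable N g x} = {x \<in> {0..N-1}. P (\<phi> x)}"
  proof (rule Collect_cong)
    fix x
    have "suitable N g x \<longleftrightarrow> x \<in> {0..N-1} \<and> ((p dvd poly g x) \<noteq> (q dvd poly g x))"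
      unfolding suitable_def using gcd_iff[OF assms(1-4), of "poly g x"] by simp
    also have "\<dots> \<longleftrightarrow> x \<in> {0..N-1} \<and> P (\<phi> x)"
      using dvdg[of p x] dvdg[of q x] by (simp add: P_def \<phi>_def)
    finally show "(x \<in> {0..N-1} \<and> suitable N g x) \<longleftrightarrow> (x \<in> {0..N-1} \<and> P (\<phi> x))" by blast
  qed
  have "card {x \<in> {0..N-1}. P (\<phi> x)} = card (\<phi> ` {x \<in> {0..N-1}. P (\<phi> x)})"
  proof -
    have injphi: "inj_on \<phi> {0..N-1}" using bij by (simp add: bij_betw_def)
    have "{x \<in> {0..N-1}. P (\<phi> x)} \<subseteq> {0..N-1}" by blast
    from card_image[OF inj_on_subset[OF injphi this]] show ?thesis by simp
  qed
  also have "\<phi> ` {x \<in> {0..N-1}. P (\<phi> x)} = {y \<in> {0..p-1} \<times> {0..q-1}. P y}"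
  proof -
    have im: "\<phi> ` {0..N-1} = {0..p-1} \<times> {0..q-1}" using bij by (simp add: bij_betw_def)
    show ?thesis by (subst image_filter) (simp only: im)
  qed
  also have "{y \<in> {0..p-1} \<times> {0..q-1}. P y} =
      B p \<times> ({0..q-1} - B q) \<union> ({0..p-1} - B p) \<times> B q"
    unfolding P_def by (rule pair_split[OF subp subq])
  also have "card \<dots> = card (B p) * card ({0..q-1} - B q) + card ({0..p-1} - B p) * card (B q)"
    by (rule card_split[OF finite_atLeastAtMost_int finite_atLeastAtMost_int subp subq])
  finally have c: "card {x \<in> {0..N-1}. P (\<phi> x)} =
      card (B p) * card ({0..q-1} - B q) + card ({0..p-1} - B p) * card (B q)" .
  have cBp: "card (B p) = 2*d" unfolding B_def
    using card_image[OF inj_mod[OF assms(1) _ assms(9)]] assms(4) by simp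
  have cBq: "card (B q) = 2*d" unfolding B_def
    using card_image[OF inj_mod[OF assms(2) _ assms(9)]] assms(4) by simp
  have dp: "card ({0..p-1} - B p) = nat p - 2*d"
    using card_Diff_subset[OF _ subp] cBp subp by (simp add: finite_subset)
  have dq: "card ({0..q-1} - B q) = nat q - 2*d"
    using card_Diff_subset[OF _ subq] cBq subq by (simp add: finite_subset)
  have lp: "2*d \<le> nat p" using card_mono[OF _ subp] cBp by simp
  have lq: "2*d \<le> nat q" using card_mono[OF _ subq] cBq by simp
  have "nu N g = 2*d*(nat q - 2*d) + (nat p - 2*d)*(2*d)"
    unfolding nu_def S c cBp cBq dp dq ..
  then have "int (nu N g) = 2*d*(q - 2*d) + (p - 2*d)*(2*d)"
    using lp lq pos by (simp add: of_nat_diff)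
  then show ?thesis unfolding g_def by (simp add: algebra_simps power2_eq_square)
qed

end
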